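(* Let $n\ge1$, $D\ge1$, and let $X_n=\{\mathbf{x}^0,\ldots,\mathbf{x}^{n-1}\}\subseteq\{0,1\}^D$ consist of $n$ pairwise distinct vectors, indexed so that $\mathbf{a}\cdot\mathbf{x}^0<\cdots<\mathbf{a}\cdot\mathbf{x}^{n-1}$ for some $\mathbf{a}\in\mathbb{Z}^D$. Then there is a five-layer Boolean threshold network with layer sizes $D$, $n$, $\lceil\log_2 n\rceil$, $n$, $D$ that is a perfect autoencoder for $X_n$, with the third layer (of size $\lceil\log_2 n\rceil$) as middle layer.
   Context: A Boolean threshold function is a map $\{0,1\}^h\to\{0,1\}$, $\mathbf{u}\mapsto[\mathbf{w}\cdot\mathbf{u}\ge\theta]$ (value $1$ iff $\mathbf{w}\cdot\mathbf{u}\ge\theta$) with $\mathbf{w}\in\mathbb{Z}^h,\theta\in\mathbb{Z}$. An $L$-layer Boolean threshold network has layers $1,\ldots,L$; layer $1$ is the input; each node of layer $t+1$ computes a Boolean threshold function of the values of layer $t$. If layer $k$ is designated the middle layer, the encoder $\mathbf{f}$ is the map from layer $1$ values to layer $k$ values and the decoder $\mathbf{g}$ the map from layer $k$ values to layer $L$ values; the network is a perfect autoencoder for $X_n$ if $\mathbf{g}(\mathbf{f}(\mathbf{x}^i))=\mathbf{x}^i$ for all $i$. *)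

theory Defs
  imports Complex_Main
begin

text \<open>Boolean vectors in {0,1}^h are represented as bool lists of length h
  (True = 1, False = 0).\<close>

definition bval :: "bool \<Rightarrow> int" where
  "bval b = (if b then 1 else 0)"

definition dotb :: "int list \<Rightarrow> bool list \<Rightarrow> int" where
  "dotb w u = (\<Sum>i<length u. w ! i * bval (u ! i))"

type_synonym node = "int list \<times> int"

definition eval_node :: "node \<Rightarrow> bool list \<Rightarrow> bool" where
  "eval_node nd u = (dotb (fst nd) u \<ge> snd nd)"

definition eval_layer :: "node list \<Rightarrow> bool list \<Rightarrow> bool list" where
  "eval_layer ly u = map (\<lambda>nd. eval_node nd u) ly"

fun eval_net :: "node list list \<Rightarrow> bool list \<Rightarrow> bool list" where
  "eval_net [] u = u"
| "eval_net (ly # lys) u = eval_net lys (eval_layer ly u)"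

definition threshold_network :: "nat list \<Rightarrow> node list list \<Rightarrow> bool" where
  "threshold_network s net \<longleftrightarrow> length s \<ge> 1 \<and> length net = length s - 1 \<and>
     (\<forall>t < length net. length (net ! t) = s ! (t + 1) \<and>
        (\<forall>nd \<in> set (net ! t). length (fst nd) = s ! t))"

text \<open>Encoder / decoder when layer k (1-based) is the middle layer.\<close>
definition encoder :: "node list list \<Rightarrow> nat \<Rightarrow> bool list \<Rightarrow> bool list" where
  "encoder net k = eval_net (take (k - 1) net)"

definition decoder :: "node list list \<Rightarrow> nat \<Rightarrow> bool list \<Rightarrow> bool list" where
  "decoder net k = eval_net (drop (k - 1) net)"

definition perfect_autoencoder ::
  "node list list \<Rightarrow> nat \<Rightarrow> (nat \<Rightarrow> bool list) \<Rightarrow> nat \<Rightarrow> bool" where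
  "perfect_autoencoder net k x n \<longleftrightarrow>
     (\<forall>i < n. decoder net k (encoder net k (x i)) = x i)"

end

theory Submission
  imports Defs
begin

lemma dotb_map: "dotb w (map f [0..<k]) = (\<Sum>j<k. w ! j * bval (f j))"
  unfolding dotb_def by simp

lemma dotb_map2: "dotb (map g [0..<k]) (map f [0..<k]) = (\<Sum>j<k. g j * bval (f j))"
  unfolding dotb_def by (auto intro: sum.cong)

lemma eval_layer_map: "eval_layer (map g [0..<k]) u = map (\<lambda>j. eval_node (g j) u) [0..<k]"
  unfolding eval_layer_def by simp

definition tw :: "nat \<Rightarrow> nat \<Rightarrow> int" where
  "tw b j = (if j = 0 then bval (bit (0::nat) b) else bval (bit j b) - bval (bit (j - 1) b))"

lemma tele: "i < n \<Longrightarrow> (\<Sum>j<n. tw b j * bval (j \<le> i)) = bval (bit i b)"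
proof -
  assume "i < n"
  have "(\<Sum>j<n. tw b j * bval (j \<le> i)) = (\<Sum>j\<in>{..i}. tw b j)"
    using \<open>i < n\<close> by (intro sum.mono_neutral_cong_right) (auto simp: bval_def)
  also have "\<dots> = bval (bit i b)"
    by (induction i) (auto simp: tw_def)
  finally show ?thesis .
qed

lemma onehot_le:
  "(\<Sum>b<m. (if bit j b then 1 else -1) * bval (bit i b)) \<le> (\<Sum>b<m. bval (bit j b))"
  by (intro sum_mono) (auto simp: bval_def)

lemma onehot_eq:
  assumes "i < 2^m" "j < 2^m"
  shows "((\<Sum>b<m. (if bit j b then 1 else -1) * bval (bit i b)) \<ge> (\<Sum>b<m. bval (bit (j::nat) b))) = (i = (j::nat))"
proof
  assume h: "(\<Sum>b<m. (if bit j b then 1 else -1) * bval (bit i b)) \<ge> (\<Sum>b<m. bval (bit (j::nat) b))"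
  have all: "\<forall>b<m. bit i b = bit j b"
  proof (rule ccontr)
    assume "\<not> (\<forall>b<m. bit i b = bit j b)"
    then obtain b0 where b0: "b0 < m" "bit i b0 \<noteq> bit j b0" by auto
    have "(\<Sum>b<m. (if bit j b then 1 else -1) * bval (bit i b)) < (\<Sum>b<m. bval (bit (j::nat) b))"
      by (rule sum_strict_mono_ex1) (use b0 in \<open>auto simp: bval_def\<close>)
    with h show False by simp
  qed
  have "bit i b = bit j b" for b
  proof (cases "b < m")
    case True then show ?thesis using all by auto
  next
    case False
    then have "2^m \<le> (2::nat)^b" by simp
    then have "i div 2^b = 0" "j div 2^b = 0" using assms
      by (simp_all add: div_eq_0_iff less_le_trans)
    then show ?thesis by (simp add: bit_nat_def)
  qed
  then show "i = j" by (simp add: bit_eq_iff)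
next
  assume "i = j"
  then show "(\<Sum>b<m. (if bit j b then 1 else -1) * bval (bit i b)) \<ge> (\<Sum>b<m. bval (bit (j::nat) b))"
    by (intro sum_mono) (auto simp: bval_def)
qed

lemma onehot_out: "(\<Sum>j<(n::nat). c j * bval (j = i)) = c i" if "i < n"
proof -
  have "(\<Sum>j<n. c j * bval (j = i)) = (\<Sum>j<n. if j = i then c j else 0)"
    by (intro sum.cong) (auto simp: bval_def)
  also have "\<dots> = c i" using that by (subst sum.delta) auto
  finally show ?thesis .
qed

theorem theorem21:
  fixes n D :: nat and x :: "nat \<Rightarrow> bool list" and a :: "int list"
  assumes "n \<ge> 1" and "D \<ge> 1"
    and "\<forall>i < n. length (x i) = D"
    and "inj_on x {..<n}"
    and "length a = D"
    and "\<forall>i j. i < j \<and> j < n \<longrightarrow> dotb a (x i) < dotb a (x j)"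
  shows "\<exists>net. threshold_network [D, n, nat \<lceil>log 2 (real n)\<rceil>, n, D] net
           \<and> perfect_autoencoder net 3 x n"
proof -
  define m where "m = nat \<lceil>log 2 (real n)\<rceil>"
  have nm: "n \<le> 2^m"
  proof -
    have "log 2 (real n) \<le> real m" unfolding m_def by linarith
    then have "real n \<le> 2 powr real m" using assms(1)
      by (simp add: log_le_iff)
    then show ?thesis by (simp add: powr_realpow)
  qed
  define L1 where "L1 = map (\<lambda>j. (a, dotb a (x j))) [0..<n]"
  define L2 where "L2 = map (\<lambda>b. (map (tw b) [0..<n], 1::int)) [0..<m]"
  define L3 where "L3 = map (\<lambda>j. (map (\<lambda>b. if bit j b then 1 else -1::int) [0..<m],
                          (\<Sum>b<m. bval (bit j b)))) [0..<n]"
  define L4 where "L4 = map (\<lambda>d. (map (\<lambda>j. bval (x j ! d)) [0..<n], 1::int)) [0..<D]"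
  define net where "net = [L1, L2, L3, L4]"
  have tn: "threshold_network [D, n, m, n, D] net"
    unfolding threshold_network_def net_def L1_def L2_def L3_def L4_def
    using assms(5) by (auto simp: less_Suc_eq nth_Cons')
  have pa: "perfect_autoencoder net 3 x n"
    unfolding perfect_autoencoder_def
  proof (intro allI impI)
    fix i assume i: "i < n"
    have s1: "eval_layer L1 (x i) = map (\<lambda>j. j \<le> i) [0..<n]"
      unfolding L1_def eval_layer_map eval_node_def
    proof (intro map_cong refl)
      fix j assume "j \<in> set [0..<n]"
      then have j: "j < n" by simp
      show "(dotb (fst (a, dotb a (x j))) (x i) \<ge> snd (a, dotb a (x j))) = (j \<le> i)"
      proof (cases "j \<le> i")
        case True
        then have "dotb a (x j) \<le> dotb a (x i)" using assms(6) i
          by (cases "j = i") (auto simp: le_less)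
        then show ?thesis using True by simp
      next
        case False
        then have "dotb a (x i) < dotb a (x j)" using assms(6) j by auto
        then show ?thesis using False by simp
      qed
    qed
    have s2: "eval_layer L2 (map (\<lambda>j. j \<le> i) [0..<n]) = map (\<lambda>b. bit i b) [0..<m]"
      unfolding L2_def eval_layer_map eval_node_def
      by (simp add: dotb_map2 tele[OF i]) (simp add: bval_def)
    have s3: "eval_layer L3 (map (\<lambda>b. bit i b) [0..<m]) = map (\<lambda>j. j = i) [0..<n]"
      unfolding L3_def eval_layer_map eval_node_def
    proof (intro map_cong refl)
      fix j assume "j \<in> set [0..<n]"
      then have j: "j < n" by simp
      show "(dotb (fst (map (\<lambda>b. if bit j b then 1 else -1) [0..<m], \<Sum>b<m. bval (bit j b)))
              (map (bit i) [0..<m]) \<ge> snd (map (\<lambda>b. if bit j b then 1 else -1) [0..<m], \<Sum>b<m. bval (bit j b))) = (j = i)"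
        using onehot_eq[of i m j] i j nm by (auto simp: dotb_map)
    qed
    have s4: "eval_layer L4 (map (\<lambda>j. j = i) [0..<n]) = x i"
    proof -
      have "eval_layer L4 (map (\<lambda>j. j = i) [0..<n]) = map (\<lambda>d. x i ! d) [0..<D]"
        unfolding L4_def eval_layer_map eval_node_def
        by (simp add: dotb_map2 onehot_out[OF i]) (simp add: bval_def)
      also have "\<dots> = x i" using assms(3) i by (intro nth_equalityI) auto
      finally show ?thesis .
    qed
    show "decoder net 3 (encoder net 3 (x i)) = x i"
      unfolding decoder_def encoder_def net_def
      by (simp add: s1 s2 s3 s4)
  qed
  show ?thesis using tn pa unfolding m_def by blast
qed

end
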